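(* Let $A$ be an $H$-supralgebra on $\mathbb{R}^N$ which is translation invariant and each of whose elements is uniformly continuous. Then the translations $x\mapsto x+y$ of $\mathbb{R}^N$ extend to a group of homeomorphisms $T(y):\Delta(A)\to\Delta(A)$, $y\in\mathbb{R}^N$, characterized by $\mathcal{G}(u(\cdot+y))(s)=\mathcal{G}(u)(T(y)s)$ for all $u\in A$, $s\in\Delta(A)$, and $\{T(y):y\in\mathbb{R}^N\}$ is a continuous $N$-dimensional dynamical system on $\Delta(A)$ whose invariant probability measure is the $M$-measure $\beta$ for $A$ (i.e. $\beta(T(y)F)=\beta(F)$ for every Borel set $F\subset\Delta(A)$ and every $y\in\mathbb{R}^N$).
   Context: $\mathcal{B}(\mathbb{R}^N)$ is the $C^*$-algebra of bounded continuous complex functions on $\mathbb{R}^N$ with the sup norm. A function $u\in\mathcal{B}(\mathbb{R}^N)$ has mean value $M(u)$ if $u(\cdot/t)\to M(u)$ weakly-* in $L^\infty(\mathbb{R}^N)$ as $t\to0^+$. An $H$-supralgebra on $\mathbb{R}^N$ is a closed subalgebra $A$ of $\mathcal{B}(\mathbb{R}^N)$ containing the constants, closed under complex conjugation, all of whose elements have a mean value. $\Delta(A)$ is the spectrum of $A$ (the set of nonzero multiplicative linear functionals on $A$ with the relative weak-* topology; it is compact), $\mathcal{G}:A\to\mathcal{C}(\Delta(A))$, $\mathcal{G}(u)(s)=s(u)$, is the Gelfand transformation (an isometric $*$-isomorphism), and the $M$-measure $\beta$ is the Radon probability measure on $\Delta(A)$ with $M(u)=\int_{\Delta(A)}\mathcal{G}(u)d\beta$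 for all $u\in A$. A continuous $N$-dimensional dynamical system on a compact space $K$ is a family of maps $T(y):K\to K$, $y\in\mathbb{R}^N$, with $T(0)=\mathrm{id}_K$, $T(x+y)=T(x)\circ T(y)$, and $(y,s)\mapsto T(y)s$ continuous from $\mathbb{R}^N\times K$ to $K$. *)

theory Defs
  imports "HOL-Analysis.Analysis"
begin

text \<open>The algebra B(R^N) of bounded continuous complex functions on R^N
  (R^N is rendered as an arbitrary euclidean_space type 'a).\<close>
definition bcontinuous :: "('a::euclidean_space \<Rightarrow> complex) set" where
  "bcontinuous = {u. continuous_on UNIV u \<and> bounded (range u)}"

text \<open>u has mean value m: u(x/t) tends to m weakly-* in L-infinity as t tends to 0+,
  i.e. tested against every Lebesgue integrable (L^1) function.\<close>
definition has_mean_value :: "('a::euclidean_space \<Rightarrow> complex) \<Rightarrow> complex \<Rightarrow> bool" where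
  "has_mean_value u m \<longleftrightarrow>
     (\<forall>\<phi>::'a \<Rightarrow> complex. integrable lebesgue \<phi> \<longrightarrow>
        ((\<lambda>t::real. LINT x|lebesgue. u (inverse t *\<^sub>R x) * \<phi> x)
          \<longlongrightarrow> m * (LINT x|lebesgue. \<phi> x)) (at_right 0))"

definition mean_value :: "('a::euclidean_space \<Rightarrow> complex) \<Rightarrow> complex" where
  "mean_value u = (THE m. has_mean_value u m)"

definition H_supralgebra :: "('a::euclidean_space \<Rightarrow> complex) set \<Rightarrow> bool" where
  "H_supralgebra A \<longleftrightarrow>
     A \<subseteq> bcontinuous \<and>
     (\<forall>c. (\<lambda>_. c) \<in> A) \<and>
     (\<forall>u\<in>A. \<forall>v\<in>A. (\<lambda>x. u x + v x) \<in> A \<and> (\<lambda>x. u x * v x) \<in> A) \<and>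
     (\<forall>c. \<forall>u\<in>A. (\<lambda>x. c * u x) \<in> A) \<and>
     (\<forall>u\<in>A. (\<lambda>x. cnj (u x)) \<in> A) \<and>
     (\<forall>f u. (\<forall>n. f n \<in> A) \<and> uniform_limit UNIV f u sequentially \<longrightarrow> u \<in> A) \<and>
     (\<forall>u\<in>A. \<exists>m. has_mean_value u m)"

text \<open>The spectrum Delta(A): nonzero multiplicative linear functionals on A
  (made extensional: value undefined outside A).  The Gelfand transform of u
  is simply the evaluation s \<mapsto> s u.\<close>
definition gelfand_spectrum ::
  "('a::euclidean_space \<Rightarrow> complex) set \<Rightarrow> (('a \<Rightarrow> complex) \<Rightarrow> complex) set" where
  "gelfand_spectrum A =
     {s. (\<forall>u\<in>A. \<forall>v\<in>A. s (\<lambda>x. u x + v x) = s u + s v \<and> s (\<lambda>x. u x * v x) = s u * s v) \<and>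
         (\<forall>c. \<forall>u\<in>A. s (\<lambda>x. c * u x) = c * s u) \<and>
         (\<exists>u\<in>A. s u \<noteq> 0) \<and>
         (\<forall>u. u \<notin> A \<longrightarrow> s u = undefined)}"

text \<open>Relative weak-* topology = topology of pointwise convergence on A.\<close>
definition spectrum_topology ::
  "('a::euclidean_space \<Rightarrow> complex) set \<Rightarrow> (('a \<Rightarrow> complex) \<Rightarrow> complex) topology" where
  "spectrum_topology A =
     subtopology (product_topology (\<lambda>_. euclidean) A) (gelfand_spectrum A)"

definition M_measure ::
  "('a::euclidean_space \<Rightarrow> complex) set \<Rightarrow> (('a \<Rightarrow> complex) \<Rightarrow> complex) measure \<Rightarrow> bool" where
  "M_measure A \<beta> \<longleftrightarrow>
     space \<beta> = gelfand_spectrum A \<and>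
     sets \<beta> = sigma_sets (gelfand_spectrum A) {U. openin (spectrum_topology A) U} \<and>
     emeasure \<beta> (space \<beta>) = 1 \<and>
     (\<forall>F\<in>sets \<beta>. emeasure \<beta> F =
        (SUP K\<in>{K. compactin (spectrum_topology A) K \<and> K \<subseteq> F}. emeasure \<beta> K)) \<and>
     (\<forall>u\<in>A. mean_value u = (LINT s|\<beta>. s u))"

definition dynamical_system :: "'s topology \<Rightarrow> ('a::euclidean_space \<Rightarrow> 's \<Rightarrow> 's) \<Rightarrow> bool" where
  "dynamical_system X T \<longleftrightarrow>
     compact_space X \<and>
     (\<forall>y. T y ` topspace X \<subseteq> topspace X) \<and>
     (\<forall>s\<in>topspace X. T 0 s = s) \<and>
     (\<forall>x y. \<forall>s\<in>topspace X. T (x + y) s = T x (T y s)) \<and>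
     continuous_map (prod_topology euclidean X) X (\<lambda>(y, s). T y s)"

end

theory Submission
  imports Defs
begin


locale hsa =
  fixes A :: "('a::euclidean_space \<Rightarrow> complex) set"
  assumes H: "H_supralgebra A"
begin

abbreviation "D \<equiv> gelfand_spectrum A"

lemma A_bc: "u \<in> A \<Longrightarrow> u \<in> bcontinuous" using H unfolding H_supralgebra_def by blast
lemma A_const[intro,simp]: "(\<lambda>_. c) \<in> A" using H unfolding H_supralgebra_def by blast
lemma A_add[intro]: "u \<in> A \<Longrightarrow> v \<in> A \<Longrightarrow> (\<lambda>x. u x + v x) \<in> A" using H unfolding H_supralgebra_def by blast
lemma A_mult[intro]: "u \<in> A \<Longrightarrow> v \<in> A \<Longrightarrow> (\<lambda>x. u x * v x) \<in> A" using H unfolding H_supralgebra_def by blast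
lemma A_scal[intro]: "u \<in> A \<Longrightarrow> (\<lambda>x. c * u x) \<in> A" using H unfolding H_supralgebra_def by blast
lemma A_cnj[intro]: "u \<in> A \<Longrightarrow> (\<lambda>x. cnj (u x)) \<in> A" using H unfolding H_supralgebra_def by blast
lemma A_lim: "(\<And>n. f n \<in> A) \<Longrightarrow> uniform_limit UNIV f u sequentially \<Longrightarrow> u \<in> A"
  using H unfolding H_supralgebra_def by blast
lemma A_mean: "u \<in> A \<Longrightarrow> \<exists>m. has_mean_value u m" using H unfolding H_supralgebra_def by blast

lemma A_diff[intro]: "u \<in> A \<Longrightarrow> v \<in> A \<Longrightarrow> (\<lambda>x. u x - v x) \<in> A"
proof -
  assume "u \<in> A" "v \<in> A"
  hence "(\<lambda>x. u x + (-1) * v x) \<in> A" by (intro A_add A_scal)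
  thus ?thesis by simp
qed

lemma A_bounded: "u \<in> A \<Longrightarrow> \<exists>B\<ge>0. \<forall>x. norm (u x) \<le> B"
proof -
  assume "u \<in> A"
  hence "bounded (range u)" using A_bc unfolding bcontinuous_def by blast
  then obtain B where "\<forall>x. norm (u x) \<le> B" unfolding bounded_iff by blast
  moreover have "B \<ge> 0" using calculation[rule_format, of 0] norm_ge_zero[of "u 0"] by linarith
  ultimately show ?thesis by blast
qed

lemma A_cont: "u \<in> A \<Longrightarrow> continuous_on UNIV u" using A_bc unfolding bcontinuous_def by blast

lemma A_pow[intro]: "u \<in> A \<Longrightarrow> (\<lambda>x. u x ^ n) \<in> A"
proof (induction n)
  case 0 then show ?case by simp
next
  case (Suc n)
  then have "(\<lambda>x. u x * u x ^ n) \<in> A" by (intro A_mult)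
  then show ?case by simp
qed

context
  fixes s assumes s: "s \<in> D"
begin
lemma s_add: "u \<in> A \<Longrightarrow> v \<in> A \<Longrightarrow> s (\<lambda>x. u x + v x) = s u + s v"
  using s unfolding gelfand_spectrum_def by blast
lemma s_mult: "u \<in> A \<Longrightarrow> v \<in> A \<Longrightarrow> s (\<lambda>x. u x * v x) = s u * s v"
  using s unfolding gelfand_spectrum_def by blast
lemma s_scal: "u \<in> A \<Longrightarrow> s (\<lambda>x. c * u x) = c * s u"
  using s unfolding gelfand_spectrum_def by blast
lemma s_out: "u \<notin> A \<Longrightarrow> s u = undefined"
  using s unfolding gelfand_spectrum_def by blast
lemma s_one: "s (\<lambda>_. 1) = 1"
proof -
  obtain u where u: "u \<in> A" "s u \<noteq> 0" using s unfolding gelfand_spectrum_def by blast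
  have "s (\<lambda>x. u x * 1) = s u * s (\<lambda>_. 1)" using s_mult[OF u(1), of "\<lambda>_. 1"] by simp
  then have "s u * 1 = s u * s (\<lambda>_. 1)" by simp
  then show ?thesis using u(2) by (metis mult_left_cancel)
qed
lemma s_const: "s (\<lambda>_. c) = c"
  using s_scal[of "\<lambda>_. 1" c] s_one by simp
lemma s_diff: "u \<in> A \<Longrightarrow> v \<in> A \<Longrightarrow> s (\<lambda>x. u x - v x) = s u - s v"
proof -
  assume u: "u \<in> A" and v: "v \<in> A"
  have e: "(\<lambda>x. u x - v x) = (\<lambda>x. u x + (-1) * v x)" by simp
  have "s (\<lambda>x. u x + (-1) * v x) = s u + s (\<lambda>x. (-1) * v x)"
    by (rule s_add[OF u A_scal[OF v]])
  also have "\<dots> = s u + (-1) * s v" by (subst s_scal[OF v]) (rule refl)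
  finally show ?thesis unfolding e by simp
qed
lemma s_pow: "u \<in> A \<Longrightarrow> s (\<lambda>x. u x ^ n) = s u ^ n"
proof (induction n)
  case 0 then show ?case using s_one by simp
next
  case (Suc n)
  have "s (\<lambda>x. u x * u x ^ n) = s u * s (\<lambda>x. u x ^ n)" using s_mult[OF Suc.prems A_pow[OF Suc.prems]] .
  then show ?case using Suc by simp
qed

lemma s_bound:
  assumes u: "u \<in> A" and B: "\<And>x. norm (u x) \<le> B"
  shows "norm (s u) \<le> B"
proof (rule ccontr)
  assume "\<not> ?thesis"
  hence lg: "norm (s u) > B" by simp
  define l where "l = s u"
  have B0: "B \<ge> 0" using B[of 0] norm_ge_zero[of "u 0"] by linarith
  have l0: "l \<noteq> 0" using lg B0 l_def by auto
  define q where "q = B / norm l"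
  have q0: "q \<ge> 0" "q < 1" using B0 lg l_def unfolding q_def by (auto simp: divide_less_eq)
  define S where "S n = (\<lambda>x. \<Sum>k<n. u x ^ k / l ^ (k+1))" for n
  define w where "w = (\<lambda>x. 1 / (l - u x))"
  have ne: "l - u x \<noteq> 0" for x using B[of x] lg l_def by auto
  have lb: "norm (l - u x) \<ge> norm l - B" for x
    using B[of x] norm_triangle_ineq2[of l "u x"] by linarith
  have SA: "S n \<in> A" for n
  proof (induction n)
    case 0 then show ?case by (simp add: S_def)
  next
    case (Suc n)
    have "(\<lambda>x. S n x + (1 / l^(n+1)) * u x ^ n) \<in> A" using Suc u by (intro A_add A_scal A_pow)
    moreover have "(\<lambda>x. S n x + (1 / l^(n+1)) * u x ^ n) = S (Suc n)"
      by (auto simp: S_def)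
    ultimately show ?case by simp
  qed
  have Sw: "S n x - w x = - ((u x / l) ^ n / (l - u x))" for n x
  proof -
    have "(\<Sum>k<n. u x ^ k / l ^ (k+1)) = (\<Sum>k<n. (u x / l) ^ k) / l"
      by (simp add: sum_divide_distrib power_divide field_simps)
    also have "\<dots> = ((1 - (u x / l) ^ n) / (1 - u x / l)) / l"
    proof -
      have "u x / l \<noteq> 1" using ne l0 by (auto simp: field_simps)
      then show ?thesis by (simp only: sum_gp_strict if_not_P if_False)
    qed
    also have "\<dots> = (1 - (u x / l) ^ n) / (l - u x)"
      using l0 ne by (simp add: field_simps)
    finally have "S n x = (1 - (u x / l) ^ n) / (l - u x)" unfolding S_def .
    then show ?thesis unfolding w_def by (simp add: diff_divide_distrib)
  qed
  have "uniform_limit UNIV S w sequentially"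
  proof (rule uniform_limitI)
    fix e :: real assume e: "e > 0"
    have "(\<lambda>n. q ^ n / (norm l - B)) \<longlonglongrightarrow> 0 / (norm l - B)"
      by (intro tendsto_divide tendsto_const LIMSEQ_power_zero) (use q0 lg l_def in auto)
    then have "\<forall>\<^sub>F n in sequentially. q ^ n / (norm l - B) < e"
      using e by (simp add: order_tendsto_iff)
    then show "\<forall>\<^sub>F n in sequentially. \<forall>x\<in>UNIV. dist (S n x) (w x) < e"
    proof (rule eventually_mono, intro ballI)
      fix n x assume n: "q ^ n / (norm l - B) < e"
      have "dist (S n x) (w x) = norm (u x / l) ^ n / norm (l - u x)"
        unfolding dist_norm Sw by (simp add: norm_divide norm_power)
      also have "\<dots> \<le> q ^ n / (norm l - B)"
      proof (rule frac_le)
        show "norm (u x / l) ^ n \<le> q ^ n" unfolding q_def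
          using B[of x] l0 by (intro power_mono) (auto simp: norm_divide divide_right_mono)
        show "0 < norm l - B" using lg l_def by simp
      qed (use lb q0 in auto)
      finally show "dist (S n x) (w x) < e" using n by simp
    qed
  qed
  then have wA: "w \<in> A" using A_lim SA by blast
  have lu: "(\<lambda>x. l - u x) \<in> A" using u by (intro A_diff A_const)
  have "(\<lambda>x. (l - u x) * w x) = (\<lambda>_. 1)" using ne unfolding w_def by auto
  then have "s (\<lambda>x. (l - u x) * w x) = 1" using s_one by simp
  moreover have "s (\<lambda>x. (l - u x) * w x) = 0"
    using s_mult[OF lu wA] s_diff[OF A_const u] s_const l_def by simp
  ultimately show False by simp
qed

end
end



context hsa
begin

lemma s_real:
  assumes s: "s \<in> D" and u: "u \<in> A" and r: "\<And>x. Im (u x) = 0"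
  shows "Im (s u) = 0"
proof (rule ccontr)
  assume b0: "Im (s u) \<noteq> 0"
  obtain B where B0: "B \<ge> 0" and B: "\<And>x. norm (u x) \<le> B" using A_bounded[OF u] by blast
  define a where "a = Re (s u)"
  define b where "b = Im (s u)"
  define t where "t = (B^2 + 1 - b^2) / (2*b)"
  have bt: "2*b*t = B^2 + 1 - b^2" using b0 unfolding t_def b_def by simp
  define v where "v = (\<lambda>x. u x + \<i> * of_real t)"
  have vA: "v \<in> A" unfolding v_def using u by (intro A_add A_const)
  have "norm (v x) \<le> sqrt (B^2 + t^2)" for x
  proof -
    have "norm (v x) = sqrt ((Re (u x))^2 + t^2)" unfolding v_def using r[of x]
      by (simp add: norm_complex_def)
    moreover have "(Re (u x))^2 \<le> B^2"
    proof -
      have "\<bar>Re (u x)\<bar> \<le> B" using B[of x] r[of x] abs_Re_le_cmod[of "u x"] by linarith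
      then show ?thesis using B0 by (simp add: abs_le_square_iff[symmetric])
    qed
    ultimately show ?thesis by simp
  qed
  then have "norm (s v) \<le> sqrt (B^2 + t^2)" using s_bound[OF s vA] by blast
  moreover have "s v = s u + \<i> * of_real t"
    unfolding v_def using s_add[OF s u A_const] s_const[OF s] by simp
  ultimately have "sqrt (a^2 + (b+t)^2) \<le> sqrt (B^2 + t^2)"
    unfolding a_def b_def by (simp add: norm_complex_def)
  then have "a^2 + (b+t)^2 \<le> B^2 + t^2" by simp
  then have "a^2 + b^2 + 2*b*t \<le> B^2" by (simp add: power2_eq_square algebra_simps)
  then show False using bt by (smt (verit) zero_le_power2)
qed

lemma s_cnj:
  assumes s: "s \<in> D" and u: "u \<in> A"
  shows "s (\<lambda>x. cnj (u x)) = cnj (s u)"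
proof -
  define r where "r = (\<lambda>x. (1/2) * (u x + cnj (u x)))"
  define q where "q = (\<lambda>x. (- \<i>/2) * (u x - cnj (u x)))"
  have rA: "r \<in> A" unfolding r_def using u by (intro A_scal A_add A_cnj)
  have qA: "q \<in> A" unfolding q_def using u by (intro A_scal A_diff A_cnj)
  have rr: "Im (r x) = 0" for x unfolding r_def by simp
  have qr: "Im (q x) = 0" for x unfolding q_def by simp
  have e1: "u = (\<lambda>x. r x + \<i> * q x)"
    unfolding r_def q_def by (auto simp: complex_eq_iff)
  have e2: "(\<lambda>x. cnj (u x)) = (\<lambda>x. r x + (- \<i>) * q x)"
    unfolding r_def q_def by (auto simp: complex_eq_iff)
  have "s u = s r + \<i> * s q" by (subst e1) (simp add: s_add[OF s rA A_scal[OF qA]] s_scal[OF s qA])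
  moreover have "s (\<lambda>x. cnj (u x)) = s r + (-\<i>) * s q"
    by (subst e2) (simp only: s_add[OF s rA A_scal[OF qA]] s_scal[OF s qA])
  moreover have "Im (s r) = 0" "Im (s q) = 0" using s_real[OF s rA rr] s_real[OF s qA qr] by auto
  ultimately show ?thesis by (simp add: complex_eq_iff)
qed

lemma s_normsq:
  assumes s: "s \<in> D" and u: "u \<in> A"
  shows "s (\<lambda>x. u x * cnj (u x)) = of_real ((cmod (s u))^2)"
  by (simp only: s_mult[OF s u A_cnj[OF u]] s_cnj[OF s u] complex_norm_square)

lemma poly_A:
  assumes p: "real_polynomial_function p" and u: "u \<in> A" and r: "\<And>x. Im (u x) = 0"
  shows "(\<lambda>x. complex_of_real (p (Re (u x)))) \<in> A \<and>
         (\<forall>s\<in>D. s (\<lambda>x. complex_of_real (p (Re (u x)))) = of_real (p (Re (s u))))"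
  using p
proof (induction p)
  case (linear f)
  then interpret bounded_linear f .
  define c where "c = f 1"
  have fe: "f y = y * c" for y using scaleR[of y 1] unfolding c_def by simp
  have e: "(\<lambda>x. complex_of_real (f (Re (u x)))) = (\<lambda>x. of_real c * u x)"
    using r by (auto simp: fe complex_eq_iff)
  show ?case unfolding e
  proof
    show "(\<lambda>x. complex_of_real c * u x) \<in> A" using u by (rule A_scal)
    show "\<forall>s\<in>D. s (\<lambda>x. complex_of_real c * u x) = complex_of_real (f (Re (s u)))"
    proof
      fix s assume s: "s \<in> D"
      have "Im (s u) = 0" by (rule s_real[OF s u r])
      then show "s (\<lambda>x. complex_of_real c * u x) = complex_of_real (f (Re (s u)))"
        using s_scal[OF s u] by (simp add: fe complex_eq_iff)
    qed
  qed
next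
  case (const c)
  then show ?case using s_const by auto
next
  case (add f g)
  have e: "(\<lambda>x. complex_of_real (f (Re (u x)) + g (Re (u x)))) =
           (\<lambda>x. complex_of_real (f (Re (u x))) + complex_of_real (g (Re (u x))))" by simp
  show ?case unfolding e
  proof
    show "(\<lambda>x. complex_of_real (f (Re (u x))) + complex_of_real (g (Re (u x)))) \<in> A"
      using add by (intro A_add) auto
    show "\<forall>s\<in>D. s (\<lambda>x. complex_of_real (f (Re (u x))) + complex_of_real (g (Re (u x)))) =
        complex_of_real (f (Re (s u)) + g (Re (s u)))"
      using add s_add by simp
  qed
next
  case (mult f g)
  have e: "(\<lambda>x. complex_of_real (f (Re (u x)) * g (Re (u x)))) =
           (\<lambda>x. complex_of_real (f (Re (u x))) * complex_of_real (g (Re (u x))))" by simp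
  show ?case unfolding e
  proof
    show "(\<lambda>x. complex_of_real (f (Re (u x))) * complex_of_real (g (Re (u x)))) \<in> A"
      using mult by (intro A_mult) auto
    show "\<forall>s\<in>D. s (\<lambda>x. complex_of_real (f (Re (u x))) * complex_of_real (g (Re (u x)))) =
        complex_of_real (f (Re (s u)) * g (Re (s u)))"
      using mult s_mult by simp
  qed
qed

lemma FC:
  assumes u: "u \<in> A" and r: "\<And>x. Im (u x) = 0" and g: "continuous_on UNIV g"
  shows "(\<lambda>x. complex_of_real (g (Re (u x)))) \<in> A \<and>
         (\<forall>s\<in>D. s (\<lambda>x. complex_of_real (g (Re (u x)))) = of_real (g (Re (s u))))"
proof -
  obtain B where B0: "B \<ge> 0" and B: "\<And>x. norm (u x) \<le> B" using A_bounded[OF u] by blast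
  define S where "S = cbox (-B) B"
  have "\<forall>n. \<exists>p. polynomial_function p \<and> (\<forall>y\<in>S. norm (g y - p y) < 1 / Suc n)"
  proof
    fix n
    have "continuous_on S g" using g by (rule continuous_on_subset) simp
    moreover have "compact S" unfolding S_def by simp
    ultimately show "\<exists>p. polynomial_function p \<and> (\<forall>y\<in>S. norm (g y - p y) < 1 / Suc n)"
      using Stone_Weierstrass_polynomial_function[of S g "1 / Suc n"] by simp
  qed
  then obtain P where P: "\<And>n. real_polynomial_function (P n)"
     and Pa: "\<And>n y. y \<in> S \<Longrightarrow> norm (g y - P n y) < 1 / Suc n"
    by (metis real_polynomial_function_eq)
  have uS: "Re (u x) \<in> S" for x using B[of x] r[of x] unfolding S_def
    by (auto simp: norm_complex_def)
  define G where "G = (\<lambda>x. complex_of_real (g (Re (u x))))"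
  define Q where "Q n = (\<lambda>x. complex_of_real (P n (Re (u x))))" for n
  have QA: "Q n \<in> A" and Qs: "\<And>s. s \<in> D \<Longrightarrow> s (Q n) = of_real (P n (Re (s u)))" for n
    using poly_A[OF P u r] unfolding Q_def by auto
  have QG: "norm (Q n x - G x) \<le> 1 / Suc n" for n x
  proof -
    have "norm (Q n x - G x) = norm (g (Re (u x)) - P n (Re (u x)))"
      unfolding Q_def G_def by (simp flip: of_real_diff add: norm_minus_commute)
    also have "\<dots> \<le> 1 / Suc n" using Pa[OF uS] less_imp_le by blast
    finally show ?thesis .
  qed
  have "uniform_limit UNIV Q G sequentially"
  proof (rule uniform_limitI)
    fix e :: real assume e: "e > 0"
    obtain N where N: "inverse (real (Suc N)) < e" using reals_Archimedean[OF e] by blast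
    show "\<forall>\<^sub>F n in sequentially. \<forall>x\<in>UNIV. dist (Q n x) (G x) < e"
    proof (rule eventually_sequentiallyI[of N], intro ballI)
      fix n x assume "N \<le> n"
      then have "1 / real (Suc n) \<le> inverse (real (Suc N))"
        by (simp add: divide_simps)
      then show "dist (Q n x) (G x) < e" using QG[of n x] N unfolding dist_norm by linarith
    qed
  qed
  then have GA: "G \<in> A" using A_lim QA by blast
  have "s G = of_real (g (Re (s u)))" if s: "s \<in> D" for s
  proof -
    have sS: "Re (s u) \<in> S"
      using s_bound[OF s u B] s_real[OF s u r] unfolding S_def by (auto simp: norm_complex_def)
    have le: "norm (s G - of_real (g (Re (s u)))) \<le> 2 / Suc n" for n
    proof -
      have "norm (s G - s (Q n)) \<le> 1 / Suc n"
      proof -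
        have "norm (s (\<lambda>x. G x - Q n x)) \<le> 1 / Suc n"
          by (rule s_bound[OF s A_diff[OF GA QA]]) (metis QG norm_minus_commute)
        then show ?thesis using s_diff[OF s GA QA] by simp
      qed
      moreover have "norm (s (Q n) - of_real (g (Re (s u)))) \<le> 1 / Suc n"
        using Pa[OF sS, of n] Qs[OF s] by (simp flip: of_real_diff add: norm_minus_commute)
      ultimately show ?thesis using norm_triangle_ineq[of "s G - s (Q n)" "s (Q n) - of_real (g (Re (s u)))"]
        by (simp add: add_divide_distrib[symmetric])
    qed
    have "norm (s G - of_real (g (Re (s u)))) = 0"
    proof (rule ccontr)
      assume "norm (s G - of_real (g (Re (s u)))) \<noteq> 0"
      then have pos: "norm (s G - of_real (g (Re (s u)))) / 2 > 0" by simp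
      obtain N where N: "inverse (real (Suc N)) < norm (s G - of_real (g (Re (s u)))) / 2"
        using reals_Archimedean[OF pos] by blast
      then show False using le[of N] by (simp add: divide_simps)
    qed
    then show ?thesis by simp
  qed
  then show ?thesis using GA unfolding G_def by blast
qed

end



lemma continuous_map_cmult:
  fixes f :: "'a \<Rightarrow> complex"
  shows "\<lbrakk>continuous_map X euclidean f; continuous_map X euclidean g\<rbrakk> \<Longrightarrow> continuous_map X euclidean (\<lambda>x. f x * g x)"
  by (simp add: continuous_map_atin tendsto_mult)

lemma closedin_eqs:
  fixes f g :: "'i \<Rightarrow> 'x \<Rightarrow> complex"
  assumes "\<And>i. i \<in> I \<Longrightarrow> continuous_map X euclidean (f i)"
      and "\<And>i. i \<in> I \<Longrightarrow> continuous_map X euclidean (g i)"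
  shows "closedin X {x \<in> topspace X. \<forall>i\<in>I. f i x = g i x}"
proof (cases "I = {}")
  case True then show ?thesis by simp
next
  case False
  have "{x \<in> topspace X. \<forall>i\<in>I. f i x = g i x} = (\<Inter>i\<in>I. {x \<in> topspace X. f i x = g i x})"
    using False by auto
  moreover have "closedin X (\<Inter>i\<in>I. {x \<in> topspace X. f i x = g i x})"
  proof (rule closedin_INT[OF False])
    fix i assume "i \<in> I"
    then show "closedin X {x \<in> topspace X. f i x = g i x}"
      using closedin_continuous_maps_eq[OF Hausdorff_space_euclidean assms(1) assms(2)] by blast
  qed
  ultimately show ?thesis by simp
qed

context hsa
begin

abbreviation "X \<equiv> spectrum_topology A"
abbreviation "P \<equiv> product_topology (\<lambda>_::('a\<Rightarrow>complex). (euclidean::complex topology)) A"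

lemma D_sub: "D \<subseteq> topspace P"
  by (auto simp: PiE_def extensional_def gelfand_spectrum_def)

lemma topspace_X [simp]: "topspace X = D"
  using D_sub unfolding spectrum_topology_def by auto

lemma proj_cont: "u \<in> A \<Longrightarrow> continuous_map X euclidean (\<lambda>s. s u)"
  unfolding spectrum_topology_def
  by (rule continuous_map_from_subtopology) (rule continuous_map_product_projection)

lemma proj_contP: "u \<in> A \<Longrightarrow> continuous_map P euclidean (\<lambda>s. s u)"
  by (rule continuous_map_product_projection)

lemma Haus_X: "Hausdorff_space X"
  unfolding spectrum_topology_def
  by (intro Hausdorff_space_subtopology) (simp add: Hausdorff_space_product_topology)

lemma D_char: "D = {s \<in> topspace P. \<forall>i\<in>A\<times>A. s (\<lambda>x. fst i x + snd i x) = s (fst i) + s (snd i)}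
    \<inter> {s \<in> topspace P. \<forall>i\<in>A\<times>A. s (\<lambda>x. fst i x * snd i x) = s (fst i) * s (snd i)}
    \<inter> {s \<in> topspace P. \<forall>i\<in>UNIV\<times>A. s (\<lambda>x. fst i * snd i x) = fst i * s (snd i)}
    \<inter> {s \<in> topspace P. \<forall>i\<in>{()}. s (\<lambda>_. 1) = 1}" (is "D = ?R")
proof
  show "D \<subseteq> ?R" using D_sub s_add s_mult s_scal s_one by auto
next
  show "?R \<subseteq> D"
  proof
    fix s assume s: "s \<in> ?R"
    then show "s \<in> D" unfolding gelfand_spectrum_def
      apply (auto simp: PiE_def extensional_def)
      by (metis A_const one_neq_zero)
  qed
qed

lemma D_closed: "closedin P D"
proof -
  have 1: "closedin P {s \<in> topspace P. \<forall>i\<in>A\<times>A. s (\<lambda>x. fst i x + snd i x) = s (fst i) + s (snd i)}"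
    by (rule closedin_eqs[where f="\<lambda>i s. s (\<lambda>x. fst i x + snd i x)" and g="\<lambda>i s. s (fst i) + s (snd i)"])
       (auto intro!: continuous_map_add proj_contP A_add)
  have 2: "closedin P {s \<in> topspace P. \<forall>i\<in>A\<times>A. s (\<lambda>x. fst i x * snd i x) = s (fst i) * s (snd i)}"
    by (rule closedin_eqs[where f="\<lambda>i s. s (\<lambda>x. fst i x * snd i x)" and g="\<lambda>i s. s (fst i) * s (snd i)"])
       (auto intro!: continuous_map_cmult proj_contP A_mult)
  have 3: "closedin P {s \<in> topspace P. \<forall>i\<in>UNIV\<times>A. s (\<lambda>x. fst i * snd i x) = fst i * s (snd i)}"
    by (rule closedin_eqs[where f="\<lambda>i s. s (\<lambda>x. fst i * snd i x)" and g="\<lambda>i s. fst i * s (snd i)"])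
       (auto intro!: continuous_map_cmult proj_contP A_scal simp: continuous_map_const)
  have 4: "closedin P {s \<in> topspace P. \<forall>i\<in>{()}. s (\<lambda>_. 1) = 1}"
    by (rule closedin_eqs[where f="\<lambda>i s. s (\<lambda>_. 1)" and g="\<lambda>i s. 1"])
       (auto intro!: proj_contP simp: continuous_map_const)
  show ?thesis unfolding D_char using 1 2 3 4 by (intro closedin_Int)
qed

definition bnd :: "('a \<Rightarrow> complex) \<Rightarrow> real" where
  "bnd u = (SOME B. B \<ge> 0 \<and> (\<forall>x. norm (u x) \<le> B))"

lemma bnd: "u \<in> A \<Longrightarrow> norm (u x) \<le> bnd u"
  using someI_ex[OF A_bounded] unfolding bnd_def by blast

lemma compact_X: "compact_space X"
proof -
  have "compactin P (PiE A (\<lambda>u. cball 0 (bnd u)))"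
    by (simp add: compactin_PiE)
  moreover have "D \<subseteq> PiE A (\<lambda>u. cball 0 (bnd u))"
    using s_bound bnd D_sub by (auto simp: PiE_def Pi_def)
  ultimately have "compactin P D" using D_closed closed_compactin by blast
  then show ?thesis unfolding spectrum_topology_def by (rule compact_space_subtopology)
qed

end

locale hsat = hsa A for A :: "('a::euclidean_space \<Rightarrow> complex) set" +
  assumes tr: "\<And>u y. u \<in> A \<Longrightarrow> (\<lambda>x. u (x + y)) \<in> A"
  and uc: "\<And>u. u \<in> A \<Longrightarrow> uniformly_continuous_on UNIV u"
begin

lemma cont_into_X: "continuous_map Y P f \<Longrightarrow> f ` topspace Y \<subseteq> D \<Longrightarrow> continuous_map Y X f"
  by (auto simp: spectrum_topology_def continuous_map_in_subtopology)

definition T :: "'a \<Rightarrow> (('a \<Rightarrow> complex) \<Rightarrow> complex) \<Rightarrow> (('a \<Rightarrow> complex) \<Rightarrow> complex)" where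
  "T y s = (\<lambda>u. if u \<in> A then s (\<lambda>x. u (x + y)) else undefined)"

lemma T_A: "u \<in> A \<Longrightarrow> T y s u = s (\<lambda>x. u (x + y))" by (simp add: T_def)

lemma T_D: assumes s: "s \<in> D" shows "T y s \<in> D"
  unfolding gelfand_spectrum_def
proof (intro CollectI conjI ballI allI impI)
  fix u v assume u: "u \<in> A" and v: "v \<in> A"
  show "T y s (\<lambda>x. u x + v x) = T y s u + T y s v"
    using s_add[OF s tr[OF u] tr[OF v]] u v A_add by (simp add: T_def)
  show "T y s (\<lambda>x. u x * v x) = T y s u * T y s v"
    using s_mult[OF s tr[OF u] tr[OF v]] u v A_mult by (simp add: T_def)
next
  fix c u assume u: "u \<in> A"
  show "T y s (\<lambda>x. c * u x) = c * T y s u"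
    using s_scal[OF s tr[OF u]] u A_scal by (simp add: T_def)
next
  show "\<exists>u\<in>A. T y s u \<noteq> 0" using s_one[OF s] by (intro bexI[of _ "\<lambda>_. 1"]) (auto simp: T_def)
next
  fix u assume "u \<notin> A" then show "T y s u = undefined" by (simp add: T_def)
qed

lemma T_comp: assumes s: "s \<in> D" shows "T a (T b s) = T (a + b) s"
proof
  fix u show "T a (T b s) u = T (a + b) s u"
    by (cases "u \<in> A") (auto simp: T_def tr add_ac)
qed

lemma T_0: assumes s: "s \<in> D" shows "T 0 s = s"
proof
  fix u show "T 0 s u = s u" by (cases "u \<in> A") (auto simp: T_def s_out[OF s])
qed

lemma T_inv: assumes s: "s \<in> D" shows "T (-y) (T y s) = s"
  using T_comp[OF s] T_0[OF s] by simp

lemma T_cont: "continuous_map X X (T y)"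
proof (rule cont_into_X)
  show "continuous_map X P (T y)"
    unfolding continuous_map_componentwise
    using proj_cont[OF tr] by (auto simp: T_def extensional_def)
  show "T y ` topspace X \<subseteq> D" using T_D by auto
qed

lemma T_homeo: "homeomorphic_map X X (T y)"
  unfolding homeomorphic_map_maps homeomorphic_maps_def
proof (intro exI[of _ "T (-y)"] conjI ballI)
  fix s assume "s \<in> topspace X"
  then have s: "s \<in> D" by simp
  show "T (-y) (T y s) = s" by (rule T_inv[OF s])
  show "T y (T (-y) s) = s" using T_inv[OF s, of "-y"] by simp
qed (rule T_cont)+

lemma T_joint: "continuous_map (prod_topology euclidean X) X (\<lambda>(y, s). T y s)"
proof (rule cont_into_X)
  show "continuous_map (prod_topology euclidean X) P (\<lambda>(y, s). T y s)"
    unfolding continuous_map_componentwise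
  proof
    show "(\<lambda>(y, s). T y s) ` topspace (prod_topology euclidean X) \<subseteq> extensional A"
      by (auto simp: T_def extensional_def)
    show "\<forall>u\<in>A. continuous_map (prod_topology euclidean X) euclidean (\<lambda>p. (case p of (y, s) \<Rightarrow> T y s) u)"
    proof
      fix u assume u: "u \<in> A"
      have "continuous_map (prod_topology euclidean X) (Met_TC.mtopology :: complex topology) (\<lambda>p. (case p of (y, s) \<Rightarrow> T y s) u)"
        unfolding Met_TC.continuous_map_to_metric
      proof (intro ballI allI impI)
        fix p :: "'a \<times> (('a \<Rightarrow> complex) \<Rightarrow> complex)" and e :: real
        assume p: "p \<in> topspace (prod_topology euclidean X)" and e: "e > 0"
        obtain y0 s0 where p0: "p = (y0, s0)" by fastforce
        have s0: "s0 \<in> D" using p p0 by auto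
        obtain d where d: "d > 0" and dd: "\<And>a b. dist a b < d \<Longrightarrow> dist (u a) (u b) < e/2"
          using uc[OF u] e unfolding uniformly_continuous_on_def by (metis half_gt_zero UNIV_I)
        define u0 where "u0 = (\<lambda>x. u (x + y0))"
        have u0A: "u0 \<in> A" unfolding u0_def by (rule tr[OF u])
        define V where "V = {s \<in> topspace X. s u0 \<in> ball (s0 u0) (e/2)}"
        have oV: "openin X V" unfolding V_def
          by (rule openin_continuous_map_preimage[OF proj_cont[OF u0A]]) simp
        show "\<exists>U. openin (prod_topology euclidean X) U \<and> p \<in> U \<and>
                (\<forall>q\<in>U. (case q of (y, s) \<Rightarrow> T y s) u \<in> Met_TC.mball ((case p of (y, s) \<Rightarrow> T y s) u) e)"
        proof (intro exI conjI ballI)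
          show "openin (prod_topology euclidean X) (ball y0 d \<times> V)"
            using oV by (simp add: openin_prod_Times_iff)
          show "p \<in> ball y0 d \<times> V" using p0 s0 d e unfolding V_def by auto
        next
          fix q assume q: "q \<in> ball y0 d \<times> V"
          obtain y s where q0: "q = (y, s)" by fastforce
          have s: "s \<in> D" and y: "dist y0 y < d" and sv: "dist (s0 u0) (s u0) < e/2"
            using q q0 unfolding V_def by auto
          have "norm (s (\<lambda>x. u (x + y) - u0 x)) \<le> e/2"
          proof (rule s_bound[OF s])
            show "(\<lambda>x. u (x + y) - u0 x) \<in> A" using tr[OF u] u0A by (rule A_diff)
            fix x
            have "dist (x + y) (x + y0) < d" using y by (simp add: dist_norm norm_minus_commute)
            then have "dist (u (x + y)) (u (x + y0)) < e/2" by (rule dd)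
            then show "norm (u (x + y) - u0 x) \<le> e/2" unfolding u0_def dist_norm by simp
          qed
          then have "dist (s (\<lambda>x. u (x + y))) (s u0) \<le> e/2"
            using s_diff[OF s tr[OF u] u0A] by (simp add: dist_norm)
          then have "dist (s0 u0) (s (\<lambda>x. u (x + y))) < e"
            using sv dist_triangle[of "s0 u0" "s (\<lambda>x. u (x + y))" "s u0"] by (simp add: dist_commute)
          then show "(case q of (y, s) \<Rightarrow> T y s) u \<in> Met_TC.mball ((case p of (y, s) \<Rightarrow> T y s) u) e"
            using u unfolding q0 p0 u0_def by (simp add: T_def)
        qed
      qed
      then show "continuous_map (prod_topology euclidean X) euclidean (\<lambda>p. (case p of (y, s) \<Rightarrow> T y s) u)"
        by simp
    qed
  qed
  show "(\<lambda>(y, s). T y s) ` topspace (prod_topology euclidean X) \<subseteq> D" using T_D by auto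
qed

lemma dyn: "dynamical_system X T"
  unfolding dynamical_system_def
  using compact_X T_D T_0 T_joint T_comp by auto

end



definition bump :: "'a::euclidean_space \<Rightarrow> complex" where
  "bump x = complex_of_real (max 0 (1 - norm x))"

lemma bump_cont: "continuous_on UNIV bump"
  unfolding bump_def by (intro continuous_intros)

lemma bump_borel[measurable]: "bump \<in> borel_measurable borel"
  by (rule borel_measurable_continuous_onI[OF bump_cont])

lemma bump_out: "norm x \<ge> 1 \<Longrightarrow> bump x = 0"
  unfolding bump_def by simp

lemma bump_eq: "bump x = indicator (cball 0 1) x *\<^sub>R bump x"
  by (cases "norm x \<le> 1") (auto simp: bump_out indicator_def)

lemma bump_int_lborel: "integrable lborel (bump :: 'a::euclidean_space \<Rightarrow> complex)"
proof -
  have "integrable lborel (\<lambda>x::'a. indicator (cball 0 1) x *\<^sub>R bump x)"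
    by (rule borel_integrable_compact) (auto intro: continuous_on_subset[OF bump_cont])
  then show ?thesis by (simp only: bump_eq[symmetric])
qed

lemma bump_int: "integrable lebesgue bump"
  using bump_int_lborel by (simp add: integrable_completion)

lemma bump_lip: "norm (bump a - bump b) \<le> norm (a - b)"
proof -
  have "\<bar>max 0 (1 - norm a) - max 0 (1 - norm b)\<bar> \<le> \<bar>norm a - norm b\<bar>" by linarith
  also have "\<dots> \<le> norm (a - b)" by (rule norm_triangle_ineq3)
  finally show ?thesis unfolding bump_def by (simp flip: of_real_diff)
qed

lemma bump_integral_nz: "(LINT x|lebesgue. bump (x::'a::euclidean_space)) \<noteq> 0"
proof -
  have "(LINT x|lborel. bump (x::'a)) = complex_of_real (LINT x|lborel. max 0 (1 - norm (x::'a)))"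
    unfolding bump_def by (rule integral_complex_of_real)
  moreover have "(LINT x|lborel. max 0 (1 - norm (x::'a))) > 0"
  proof -
    have ir: "integrable lborel (\<lambda>x::'a. max 0 (1 - norm x))"
      using integrable_Re[OF bump_int_lborel[where 'a='a]] by (simp add: bump_def)
    have int1: "integrable lborel (\<lambda>x::'a. indicator (ball (0::'a) (1/2)) x * (1/2::real))"
      using emeasure_bounded_finite[OF bounded_ball, of "0::'a" "1/2"]
      by (intro integrable_mult_left integrable_real_indicator) auto
    have le: "indicator (ball (0::'a) (1/2)) x * (1/2::real) \<le> max 0 (1 - norm x)" for x :: 'a
      by (cases "x \<in> ball 0 (1/2)") (auto simp: indicator_def)
    have "(LINT x|lborel. indicator (ball (0::'a) (1/2)) x * (1/2::real)) \<le> (LINT x|lborel. max 0 (1 - norm (x::'a)))"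
      by (rule integral_mono[OF int1 ir]) (rule le)
    moreover have "(LINT x|lborel. indicator (ball (0::'a) (1/2)) x * (1/2::real)) = measure lborel (ball (0::'a) (1/2)) * (1/2)"
      by simp
    moreover have "measure lborel (ball (0::'a) (1/2)) > 0" by (rule content_ball_pos) simp
    ultimately show ?thesis by linarith
  qed
  moreover have "(LINT x|lebesgue. bump (x::'a)) = (LINT x|lborel. bump (x::'a))"
    by (rule integral_completion) (simp add: measurable_lborel1 bump_borel)
  ultimately show ?thesis by simp
qed

lemma lborel_translate_integral:
  fixes f :: "'a::euclidean_space \<Rightarrow> complex"
  assumes [measurable]: "f \<in> borel_measurable borel"
  shows "(LINT x|lborel. f x) = (LINT x|lborel. f (c + x))"
proof -
  have "(LINT x|lborel. f x) = (LINT x|distr lborel borel ((+) c). f x)"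
    by (simp add: lborel_distr_plus)
  also have "\<dots> = (LINT x|lborel. f (c + x))"
    by (rule integral_distr) auto
  finally show ?thesis .
qed

lemma mean_unique:
  fixes u :: "'a::euclidean_space \<Rightarrow> complex"
  assumes "has_mean_value u m1" "has_mean_value u m2"
  shows "m1 = m2"
proof -
  have "((\<lambda>t::real. LINT x|lebesgue. u (inverse t *\<^sub>R x) * bump x) \<longlongrightarrow> m1 * (LINT x|lebesgue. bump (x::'a))) (at_right 0)"
    "((\<lambda>t::real. LINT x|lebesgue. u (inverse t *\<^sub>R x) * bump x) \<longlongrightarrow> m2 * (LINT x|lebesgue. bump (x::'a))) (at_right 0)"
    using assms(1)[unfolded has_mean_value_def, rule_format, OF bump_int]
      assms(2)[unfolded has_mean_value_def, rule_format, OF bump_int] by auto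
  then have "m1 * (LINT x|lebesgue. bump (x::'a)) = m2 * (LINT x|lebesgue. bump (x::'a))"
    by (rule tendsto_unique[rotated]) simp
  then show ?thesis using bump_integral_nz[where 'a='a] by simp
qed

lemma mean_value_eq: "has_mean_value u m \<Longrightarrow> mean_value u = m"
  unfolding mean_value_def using mean_unique by blast

lemma mean_shift:
  fixes u :: "'a::euclidean_space \<Rightarrow> complex"
  assumes uc: "continuous_on UNIV u" and B: "\<And>x. norm (u x) \<le> B"
    and m: "has_mean_value u m" and m': "has_mean_value (\<lambda>x. u (x + y)) m'"
  shows "m' = m"
proof -
  have ub[measurable]: "u \<in> borel_measurable borel" using uc by (simp add: borel_measurable_continuous_onI)
  define F1 where "F1 t = (LINT x|lebesgue. u (inverse t *\<^sub>R x + y) * bump x)" for t :: real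
  define F2 where "F2 t = (LINT x|lebesgue. u (inverse t *\<^sub>R x) * bump x)" for t :: real
  have l1: "(F1 \<longlongrightarrow> m' * (LINT x|lebesgue. bump (x::'a))) (at_right 0)"
    using m'[unfolded has_mean_value_def, rule_format, OF bump_int] unfolding F1_def by simp
  have l2: "(F2 \<longlongrightarrow> m * (LINT x|lebesgue. bump (x::'a))) (at_right 0)"
    using m[unfolded has_mean_value_def, rule_format, OF bump_int] unfolding F2_def by simp
  define C where "C = B * norm y * measure lborel (cball (0::'a) 2)"
  have ev: "\<forall>\<^sub>F t in at_right 0. norm (F1 t - F2 t) \<le> C * t"
  proof -
    have "\<forall>\<^sub>F t in at_right (0::real). t \<in> {0<..<inverse (norm y + 1)}"
      by (rule eventually_at_right_real) (simp add: add_nonneg_pos)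
    then show ?thesis
    proof (rule eventually_mono)
      fix t :: real assume t: "t \<in> {0<..<inverse (norm y + 1)}"
      have pos: "norm y + 1 > 0" using norm_ge_zero[of y] by linarith
      have t0: "t > 0" using t by simp
      have "t * (norm y + 1) < inverse (norm y + 1) * (norm y + 1)"
        using t pos by (intro mult_strict_right_mono) auto
      then have t1: "t * (norm y + 1) < 1" using pos by simp
      have "t * (norm y + 1) = t * norm y + t" by (simp add: algebra_simps)
      then have ty: "t * norm y \<le> 1" using t1 t0 by linarith
      have bo: "(\<lambda>x. u (inverse t *\<^sub>R x + y) * bump x) \<in> borel_measurable borel" by measurable
      have "F1 t = (LINT x|lborel. u (inverse t *\<^sub>R x + y) * bump x)"
        unfolding F1_def by (rule integral_completion) measurable
      also have "\<dots> = (LINT x|lborel. u (inverse t *\<^sub>R ((- (t *\<^sub>R y)) + x) + y) * bump ((- (t *\<^sub>R y)) + x))"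
        by (rule lborel_translate_integral[OF bo])
      also have "\<dots> = (LINT x|lborel. u (inverse t *\<^sub>R x) * bump (x - t *\<^sub>R y))"
        using t0 by (simp add: algebra_simps)
      finally have f1: "F1 t = (LINT x|lborel. u (inverse t *\<^sub>R x) * bump (x - t *\<^sub>R y))" .
      have f2: "F2 t = (LINT x|lborel. u (inverse t *\<^sub>R x) * bump x)"
        unfolding F2_def by (rule integral_completion) measurable
      have ptw: "norm (u (inverse t *\<^sub>R x) * bump (x - t *\<^sub>R y) - u (inverse t *\<^sub>R x) * bump x)
                 \<le> indicator (cball (0::'a) 2) x * (B * (t * norm y))" for x
      proof (cases "norm x \<le> 2")
        case True
        have "norm (u (inverse t *\<^sub>R x) * bump (x - t *\<^sub>R y) - u (inverse t *\<^sub>R x) * bump x)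
              = norm (u (inverse t *\<^sub>R x)) * norm (bump (x - t *\<^sub>R y) - bump x)"
          by (simp add: norm_mult right_diff_distrib[symmetric])
        also have "\<dots> \<le> B * (t * norm y)"
        proof (rule mult_mono)
          show "norm (bump (x - t *\<^sub>R y) - bump x) \<le> t * norm y"
            using bump_lip[of "x - t *\<^sub>R y" x] t0 by simp
        qed (use B t0 norm_ge_zero order_trans in blast)+
        finally show ?thesis using True by simp
      next
        case False
        have "norm (x - t *\<^sub>R y) \<ge> 1"
          using False ty norm_triangle_ineq2[of x "t *\<^sub>R y"] t0 by simp
        then show ?thesis using False by (simp add: bump_out)
      qed
      have i1: "integrable lborel (\<lambda>x. u (inverse t *\<^sub>R x) * bump (x - t *\<^sub>R y))"
      proof (rule Bochner_Integration.integrable_bound)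
        show "integrable lborel (\<lambda>x. B * norm (bump (x - t *\<^sub>R y)))"
        proof -
          have "integrable (distr lborel borel ((+) (- (t *\<^sub>R y)))) bump"
            using bump_int_lborel lborel_distr_plus[of "- (t *\<^sub>R y)"] by simp
          then have "integrable lborel (\<lambda>x. bump (- (t *\<^sub>R y) + x))"
            by (subst (asm) integrable_distr_eq) auto
          then show ?thesis by (intro integrable_mult_right integrable_norm) simp
        qed
        show "AE x in lborel. norm (u (inverse t *\<^sub>R x) * bump (x - t *\<^sub>R y)) \<le> norm (B * norm (bump (x - t *\<^sub>R y)))"
        proof (rule AE_I2)
          fix x
          have "norm (u (inverse t *\<^sub>R x) * bump (x - t *\<^sub>R y)) = norm (u (inverse t *\<^sub>R x)) * norm (bump (x - t *\<^sub>R y))"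
            by (rule norm_mult)
          also have "\<dots> \<le> B * norm (bump (x - t *\<^sub>R y))" by (rule mult_right_mono[OF B norm_ge_zero])
          also have "\<dots> \<le> norm (B * norm (bump (x - t *\<^sub>R y)))" unfolding real_norm_def by (rule abs_ge_self)
          finally show "norm (u (inverse t *\<^sub>R x) * bump (x - t *\<^sub>R y)) \<le> norm (B * norm (bump (x - t *\<^sub>R y)))" .
        qed
      qed measurable
      have i2: "integrable lborel (\<lambda>x. u (inverse t *\<^sub>R x) * bump x)"
      proof (rule Bochner_Integration.integrable_bound)
        show "integrable lborel (\<lambda>x. B * norm (bump x))"
          using bump_int_lborel by (intro integrable_mult_right integrable_norm)
        show "AE x in lborel. norm (u (inverse t *\<^sub>R x) * bump x) \<le> norm (B * norm (bump x))"
        proof (rule AE_I2)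
          fix x
          have "norm (u (inverse t *\<^sub>R x) * bump x) = norm (u (inverse t *\<^sub>R x)) * norm (bump x)"
            by (rule norm_mult)
          also have "\<dots> \<le> B * norm (bump x)" by (rule mult_right_mono[OF B norm_ge_zero])
          also have "\<dots> \<le> norm (B * norm (bump x))" unfolding real_norm_def by (rule abs_ge_self)
          finally show "norm (u (inverse t *\<^sub>R x) * bump x) \<le> norm (B * norm (bump x))" .
        qed
      qed measurable
      have "norm (F1 t - F2 t) = norm (LINT x|lborel. u (inverse t *\<^sub>R x) * bump (x - t *\<^sub>R y) - u (inverse t *\<^sub>R x) * bump x)"
        unfolding f1 f2 using i1 i2 by simp
      also have "\<dots> \<le> (LINT x|lborel. norm (u (inverse t *\<^sub>R x) * bump (x - t *\<^sub>R y) - u (inverse t *\<^sub>R x) * bump x))"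
        by (rule integral_norm_bound)
      also have "\<dots> \<le> (LINT x|lborel. indicator (cball (0::'a) 2) x * (B * (t * norm y)))"
      proof (rule integral_mono[OF integrable_norm[OF Bochner_Integration.integrable_diff[OF i1 i2]]])
        show "integrable lborel (\<lambda>x. indicator (cball (0::'a) 2) x * (B * (t * norm y)))"
          using emeasure_bounded_finite[OF bounded_cball, of "0::'a" 2]
          by (intro integrable_mult_left integrable_real_indicator) auto
      qed (rule ptw)
      also have "\<dots> = measure lborel (cball (0::'a) 2) * (B * (t * norm y))" by simp
      also have "\<dots> = C * t" unfolding C_def by (simp only: mult_ac)
      finally show "norm (F1 t - F2 t) \<le> C * t" .
    qed
  qed
  have "((\<lambda>t. F1 t - F2 t) \<longlongrightarrow> 0) (at_right 0)"
  proof (rule Lim_null_comparison[OF ev])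
    have "((\<lambda>t::real. C * t) \<longlongrightarrow> C * 0) (at_right 0)" by (intro tendsto_intros)
    then show "((\<lambda>t::real. C * t) \<longlongrightarrow> 0) (at_right 0)" by simp
  qed
  moreover have "((\<lambda>t. F1 t - F2 t) \<longlongrightarrow> m' * (LINT x|lebesgue. bump (x::'a)) - m * (LINT x|lebesgue. bump (x::'a))) (at_right 0)"
    using l1 l2 by (rule tendsto_diff)
  ultimately have "m' * (LINT x|lebesgue. bump (x::'a)) - m * (LINT x|lebesgue. bump (x::'a)) = 0"
    using tendsto_unique by (metis trivial_limit_at_right_real)
  then show ?thesis using bump_integral_nz[where 'a='a] by simp
qed




context hsa
begin

lemma A_sum: "finite I \<Longrightarrow> (\<And>i. i \<in> I \<Longrightarrow> f i \<in> A) \<Longrightarrow> (\<lambda>x. \<Sum>i\<in>I. f i x) \<in> A"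
proof (induction I rule: finite_induct)
  case empty then show ?case by simp
next
  case (insert a F)
  have "(\<lambda>x. f a x + (\<Sum>i\<in>F. f i x)) \<in> A" using insert by (intro A_add) auto
  then show ?case using insert by simp
qed

lemma s_sum: assumes s: "s \<in> D" shows "finite I \<Longrightarrow> (\<And>i. i \<in> I \<Longrightarrow> f i \<in> A) \<Longrightarrow> s (\<lambda>x. \<Sum>i\<in>I. f i x) = (\<Sum>i\<in>I. s (f i))"
proof (induction I rule: finite_induct)
  case empty then show ?case using s_const[OF s] by simp
next
  case (insert a F)
  have "s (\<lambda>x. f a x + (\<Sum>i\<in>F. f i x)) = s (f a) + s (\<lambda>x. \<Sum>i\<in>F. f i x)"
    using insert by (intro s_add[OF s] A_sum) auto
  then show ?case using insert by simp
qed

lemma A_prod: "finite I \<Longrightarrow> (\<And>i. i \<in> I \<Longrightarrow> f i \<in> A) \<Longrightarrow> (\<lambda>x. \<Prod>i\<in>I. f i x) \<in> A"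
proof (induction I rule: finite_induct)
  case empty then show ?case by simp
next
  case (insert a F)
  have "(\<lambda>x. f a x * (\<Prod>i\<in>F. f i x)) \<in> A" using insert by (intro A_mult) auto
  then show ?case using insert by simp
qed

lemma s_prod: assumes s: "s \<in> D" shows "finite I \<Longrightarrow> (\<And>i. i \<in> I \<Longrightarrow> f i \<in> A) \<Longrightarrow> s (\<lambda>x. \<Prod>i\<in>I. f i x) = (\<Prod>i\<in>I. s (f i))"
proof (induction I rule: finite_induct)
  case empty then show ?case using s_one[OF s] by simp
next
  case (insert a F)
  have "s (\<lambda>x. f a x * (\<Prod>i\<in>F. f i x)) = s (f a) * s (\<lambda>x. \<Prod>i\<in>F. f i x)"
    using insert by (intro s_mult[OF s] A_prod) auto
  then show ?case using insert by simp
qed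

definition good :: "('a \<Rightarrow> complex) \<Rightarrow> bool" where
  "good w \<longleftrightarrow> w \<in> A \<and> (\<forall>x. Im (w x) = 0)"

lemma good_s: "good w \<Longrightarrow> s \<in> D \<Longrightarrow> s w = of_real (Re (s w))"
  unfolding good_def using s_real by (auto simp: complex_eq_iff)

lemma FCg:
  assumes w: "good w" and g: "continuous_on UNIV g"
  shows "good (\<lambda>x. of_real (g (Re (w x)))) \<and> (\<forall>s\<in>D. s (\<lambda>x. of_real (g (Re (w x)))) = of_real (g (Re (s w))))"
  using FC[of w g] w g unfolding good_def by auto

lemma sepA:
  assumes k: "k \<in> D" and L: "compactin X L" and kL: "k \<notin> L"
  shows "\<exists>g. good g \<and> (\<forall>s\<in>D. 0 \<le> Re (s g) \<and> Re (s g) \<le> 1 \<and> s g = of_real (Re (s g))) \<and>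
             Re (k g) = 0 \<and> (\<forall>s\<in>L. Re (s g) = 1)"
proof -
  have LD: "L \<subseteq> D" using L compactin_subset_topspace by fastforce
  have "\<exists>v. good v \<and> (\<forall>s\<in>D. Re (s v) \<ge> 0) \<and> Re (k v) = 0 \<and> Re (l v) = 1" if l: "l \<in> L" for l
  proof -
    have lD: "l \<in> D" using l LD by blast
    obtain u where u: "u \<in> A" "l u \<noteq> k u"
    proof (rule ccontr)
      assume "\<not> thesis"
      then have "\<forall>u\<in>A. l u = k u" using that by blast
      then have "l = k" using s_out[OF lD] s_out[OF k] by (metis ext)
      then show False using l kL by simp
    qed
    define a where "a = k u"
    define c where "c = 1 / (cmod (l u - a))^2"
    define w0 where "w0 = (\<lambda>x. u x - a)"
    have w0A: "w0 \<in> A" unfolding w0_def using u(1) by (intro A_diff A_const)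
    define v where "v = (\<lambda>x. complex_of_real c * (w0 x * cnj (w0 x)))"
    have vA: "v \<in> A" unfolding v_def using w0A by (intro A_scal A_mult A_cnj)
    have vgood: "good v" unfolding good_def v_def using vA
      by (simp add: v_def complex_mult_cnj)
    have sv: "s v = complex_of_real (c * (cmod (s u - a))^2)" if s: "s \<in> D" for s
    proof -
      have "s v = of_real c * s (\<lambda>x. w0 x * cnj (w0 x))"
        unfolding v_def by (rule s_scal[OF s A_mult[OF w0A A_cnj[OF w0A]]])
      also have "\<dots> = of_real c * of_real ((cmod (s w0))^2)" using s_normsq[OF s w0A] by simp
      also have "s w0 = s u - a" unfolding w0_def using s_diff[OF s u(1) A_const] s_const[OF s] by simp
      finally show ?thesis by simp
    qed
    have c0: "c > 0" unfolding c_def using u(2) a_def by simp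
    have Rsv: "Re (s v) = c * (cmod (s u - a))^2" if s: "s \<in> D" for s
      by (simp only: sv[OF s] Re_complex_of_real)
    show ?thesis
    proof (intro exI conjI ballI)
      show "good v" by (rule vgood)
      fix s assume "s \<in> D" then show "Re (s v) \<ge> 0" using Rsv c0 by simp
    next
      show "Re (k v) = 0" using Rsv[OF k] a_def by simp
      show "Re (l v) = 1" using Rsv[OF lD] c0 unfolding c_def a_def using u(2) by simp
    qed
  qed
  then obtain V where V: "\<And>l. l \<in> L \<Longrightarrow> good (V l) \<and> (\<forall>s\<in>D. Re (s (V l)) \<ge> 0) \<and> Re (k (V l)) = 0 \<and> Re (l (V l)) = 1"
    by metis
  define Ol where "Ol l = {s \<in> topspace X. s (V l) \<in> {z. Re z > 1/2}}" for l
  have oO: "openin X (Ol l)" if "l \<in> L" for l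
    unfolding Ol_def
  proof (rule openin_continuous_map_preimage[OF proj_cont])
    show "V l \<in> A" using V[OF that] by (simp add: good_def)
    show "openin euclidean {z::complex. Re z > 1/2}" unfolding open_openin[symmetric] by (rule open_halfspace_Re_gt)
  qed
  have cov: "L \<subseteq> \<Union>(Ol ` L)"
  proof
    fix l assume l: "l \<in> L"
    then have "l \<in> Ol l" using V[OF l] LD unfolding Ol_def by auto
    then show "l \<in> \<Union>(Ol ` L)" using l by blast
  qed
  obtain F where F: "finite F" "F \<subseteq> Ol ` L" "L \<subseteq> \<Union>F"
    using L cov oO unfolding compactin_def by (metis (no_types, lifting) imageE)
  obtain Lf where Lf: "Lf \<subseteq> L" "finite Lf" "F = Ol ` Lf"
    using finite_subset_image[OF F(1) F(2)] by blast
  define W where "W = (\<lambda>x. \<Sum>l\<in>Lf. 2 * V l x)"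
  have VA: "\<And>l. l \<in> Lf \<Longrightarrow> V l \<in> A" using V Lf(1) unfolding good_def by blast
  have WA: "W \<in> A" unfolding W_def using Lf(2) VA by (intro A_sum A_scal) auto
  have Wg: "good W" unfolding good_def using WA V Lf(1) unfolding W_def good_def
    by (auto simp: Im_sum intro!: sum.neutral)
  have sW: "s W = (\<Sum>l\<in>Lf. 2 * s (V l))" if s: "s \<in> D" for s
    unfolding W_def using s_sum[OF s Lf(2), of "\<lambda>l x. 2 * V l x"] s_scal[OF s] VA
    by (simp add: A_scal)
  have ReW: "Re (s W) = (\<Sum>l\<in>Lf. 2 * Re (s (V l)))" if s: "s \<in> D" for s
    using sW[OF s] by (simp add: Re_sum)
  have W0: "Re (s W) \<ge> 0" if s: "s \<in> D" for s
    unfolding ReW[OF s] using V Lf(1) s by (intro sum_nonneg) auto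
  have Wk: "Re (k W) = 0" unfolding ReW[OF k] using V Lf(1) by (intro sum.neutral) auto
  have WL: "Re (s W) > 1" if s: "s \<in> L" for s
  proof -
    obtain l where l: "l \<in> Lf" "s \<in> Ol l" using s Lf(3) F(3) by auto
    have sD: "s \<in> D" using s LD by blast
    have "2 * Re (s (V l)) \<le> (\<Sum>l\<in>Lf. 2 * Re (s (V l)))"
      by (rule member_le_sum) (use l V Lf(1) Lf(2) sD in auto)
    moreover have "Re (s (V l)) > 1/2" using l(2) unfolding Ol_def by simp
    ultimately show ?thesis using ReW[OF sD] by simp
  qed
  define cl where "cl t = min 1 (max 0 t)" for t :: real
  have clc: "continuous_on UNIV cl" unfolding cl_def by (intro continuous_intros)
  define g where "g = (\<lambda>x. complex_of_real (cl (Re (W x))))"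
  have gg: "good g" and sg: "\<And>s. s \<in> D \<Longrightarrow> s g = of_real (cl (Re (s W)))"
    using FCg[OF Wg clc] unfolding g_def by auto
  show ?thesis
  proof (intro exI conjI ballI)
    show "good g" by (rule gg)
    fix s assume s: "s \<in> D"
    show "0 \<le> Re (s g)" "Re (s g) \<le> 1" "s g = of_real (Re (s g))"
      using sg[OF s] unfolding cl_def by auto
  next
    show "Re (k g) = 0" using sg[OF k] Wk unfolding cl_def by simp
  next
    fix s assume s: "s \<in> L"
    have sD: "s \<in> D" using s LD by blast
    show "Re (s g) = 1" using sg[OF sD] WL[OF s] unfolding cl_def by simp
  qed
qed

lemma sepB:
  assumes K: "compactin X K" and L: "compactin X L" and KL: "K \<inter> L = {}"
  shows "\<exists>w. good w \<and> (\<forall>s\<in>D. 0 \<le> Re (s w) \<and> Re (s w) \<le> 1 \<and> s w = of_real (Re (s w))) \<and>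
             (\<forall>s\<in>K. Re (s w) = 1) \<and> (\<forall>s\<in>L. Re (s w) = 0)"
proof -
  have KD: "K \<subseteq> D" using K compactin_subset_topspace by fastforce
  have LD: "L \<subseteq> D" using L compactin_subset_topspace by fastforce
  have "\<exists>g. good g \<and> (\<forall>s\<in>D. 0 \<le> Re (s g) \<and> Re (s g) \<le> 1 \<and> s g = of_real (Re (s g))) \<and>
             Re (k g) = 0 \<and> (\<forall>s\<in>L. Re (s g) = 1)" if k: "k \<in> K" for k
    using sepA[OF _ L] k KD KL by blast
  then obtain G where G: "\<And>k. k \<in> K \<Longrightarrow> good (G k) \<and> (\<forall>s\<in>D. 0 \<le> Re (s (G k)) \<and> Re (s (G k)) \<le> 1 \<and> s (G k) = of_real (Re (s (G k)))) \<and>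
             Re (k (G k)) = 0 \<and> (\<forall>s\<in>L. Re (s (G k)) = 1)"
    by metis
  define Pk where "Pk k = {s \<in> topspace X. s (G k) \<in> {z. Re z < 1/2}}" for k
  have oP: "openin X (Pk k)" if "k \<in> K" for k
    unfolding Pk_def
  proof (rule openin_continuous_map_preimage[OF proj_cont])
    show "G k \<in> A" using G[OF that] by (simp add: good_def)
    show "openin euclidean {z::complex. Re z < 1/2}" unfolding open_openin[symmetric] by (rule open_halfspace_Re_lt)
  qed
  have cov: "K \<subseteq> \<Union>(Pk ` K)"
  proof
    fix k assume k: "k \<in> K"
    then have "k \<in> Pk k" using G[OF k] KD unfolding Pk_def by auto
    then show "k \<in> \<Union>(Pk ` K)" using k by blast
  qed
  obtain F where F: "finite F" "F \<subseteq> Pk ` K" "K \<subseteq> \<Union>F"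
    using K cov oP unfolding compactin_def by (metis (no_types, lifting) imageE)
  obtain Kf where Kf: "Kf \<subseteq> K" "finite Kf" "F = Pk ` Kf"
    using finite_subset_image[OF F(1) F(2)] by blast
  have GA: "\<And>k. k \<in> Kf \<Longrightarrow> G k \<in> A" using G Kf(1) unfolding good_def by blast
  define h where "h = (\<lambda>x. \<Prod>k\<in>Kf. G k x)"
  have hA: "h \<in> A" unfolding h_def using Kf(2) GA by (intro A_prod) auto
  have hr: "h x = of_real (\<Prod>k\<in>Kf. Re (G k x))" for x
  proof -
    have "h x = (\<Prod>k\<in>Kf. complex_of_real (Re (G k x)))"
      unfolding h_def using G Kf(1) by (intro prod.cong) (auto simp: good_def complex_eq_iff)
    then show ?thesis by simp
  qed
  have "Im (h x) = 0" for x by (subst hr) (simp only: Im_complex_of_real)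
  then have hg: "good h" unfolding good_def using hA by simp
  have sh: "Re (s h) = (\<Prod>k\<in>Kf. Re (s (G k)))" if s: "s \<in> D" for s
  proof -
    have "s h = (\<Prod>k\<in>Kf. s (G k))" unfolding h_def using s_prod[OF s Kf(2) GA] by simp
    also have "\<dots> = (\<Prod>k\<in>Kf. complex_of_real (Re (s (G k))))"
      using G Kf(1) s by (intro prod.cong) auto
    also have "\<dots> = complex_of_real (\<Prod>k\<in>Kf. Re (s (G k)))" by simp
    finally have "s h = complex_of_real (\<Prod>k\<in>Kf. Re (s (G k)))" .
    then show ?thesis by (simp only: Re_complex_of_real)
  qed
  have hL: "Re (s h) = 1" if s: "s \<in> L" for s
    unfolding sh[OF subsetD[OF LD s]] using G Kf(1) s by (intro prod.neutral) auto
  have hK: "Re (s h) < 1/2" if s: "s \<in> K" for s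
  proof -
    obtain k where k: "k \<in> Kf" "s \<in> Pk k" using s Kf(3) F(3) by auto
    have sD: "s \<in> D" using s KD by blast
    have r: "0 \<le> Re (s (G j)) \<and> Re (s (G j)) \<le> 1" if "j \<in> Kf" for j using G Kf(1) that sD by blast
    have "(\<Prod>j\<in>Kf. Re (s (G j))) = Re (s (G k)) * (\<Prod>j\<in>Kf - {k}. Re (s (G j)))"
      using prod.remove[OF Kf(2) k(1)] .
    also have "\<dots> \<le> Re (s (G k)) * 1"
      using r k(1) by (intro mult_left_mono prod_le_1) auto
    also have "\<dots> < 1/2" using k(2) unfolding Pk_def by simp
    finally show ?thesis using sh[OF sD] by simp
  qed
  define cl where "cl t = min 1 (max 0 (2 - 2 * t))" for t :: real
  have clc: "continuous_on UNIV cl" unfolding cl_def by (intro continuous_intros)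
  define w where "w = (\<lambda>x. complex_of_real (cl (Re (h x))))"
  have wg: "good w" and sw: "\<And>s. s \<in> D \<Longrightarrow> s w = of_real (cl (Re (s h)))"
    using FCg[OF hg clc] unfolding w_def by auto
  show ?thesis
  proof (intro exI conjI ballI)
    show "good w" by (rule wg)
    fix s assume s: "s \<in> D"
    show "0 \<le> Re (s w)" "Re (s w) \<le> 1" "s w = of_real (Re (s w))"
      using sw[OF s] unfolding cl_def by auto
  next
    fix s assume s: "s \<in> K"
    have sD: "s \<in> D" using s KD by blast
    show "Re (s w) = 1" using sw[OF sD] hK[OF s] unfolding cl_def by simp
  next
    fix s assume s: "s \<in> L"
    have sD: "s \<in> D" using s LD by blast
    show "Re (s w) = 0" using sw[OF sD] hL[OF s] unfolding cl_def by simp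
  qed
qed

end



context hsat
begin

context
  fixes \<beta> assumes Mb: "M_measure A \<beta>"
begin

lemma b_space: "space \<beta> = D" using Mb unfolding M_measure_def by blast
lemma b_sets: "sets \<beta> = sigma_sets D {U. openin X U}" using Mb unfolding M_measure_def by blast
lemma b_one: "emeasure \<beta> (space \<beta>) = 1" using Mb unfolding M_measure_def by blast
lemma b_reg: "F \<in> sets \<beta> \<Longrightarrow> emeasure \<beta> F = (SUP K\<in>{K. compactin X K \<and> K \<subseteq> F}. emeasure \<beta> K)"
  using Mb unfolding M_measure_def by blast
lemma b_mean: "u \<in> A \<Longrightarrow> mean_value u = (LINT s|\<beta>. s u)"
  using Mb unfolding M_measure_def by blast

lemma b_fin: "finite_measure \<beta>" using b_one by (intro finite_measureI) simp

lemma b_meas1: "measure \<beta> (space \<beta>) = 1" using b_one by (simp add: measure_def)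

lemma open_meas: "openin X U \<Longrightarrow> U \<in> sets \<beta>"
  unfolding b_sets by (rule sigma_sets.Basic) simp

lemma closed_meas: assumes "closedin X C" shows "C \<in> sets \<beta>"
proof -
  have "openin X (D - C)" using assms unfolding closedin_def by simp
  then have "D - C \<in> sets \<beta>" by (rule open_meas)
  then have "space \<beta> - (D - C) \<in> sets \<beta>" by (rule sets.compl_sets)
  moreover have "space \<beta> - (D - C) = C" using assms closedin_subset b_space by fastforce
  ultimately show ?thesis by simp
qed

lemma compact_meas: "compactin X K \<Longrightarrow> K \<in> sets \<beta>"
  by (rule closed_meas) (rule compactin_imp_closedin[OF Haus_X])

lemma proj_meas: assumes u: "u \<in> A" shows "(\<lambda>s. s u) \<in> borel_measurable \<beta>"
proof (rule borel_measurableI)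
  fix S :: "complex set" assume S: "open S"
  have "(\<lambda>s. s u) -` S \<inter> space \<beta> = {s \<in> topspace X. s u \<in> S}" using b_space by auto
  moreover have "openin X {s \<in> topspace X. s u \<in> S}"
    by (rule openin_continuous_map_preimage[OF proj_cont[OF u]]) (simp add: S)
  ultimately show "(\<lambda>s. s u) -` S \<inter> space \<beta> \<in> sets \<beta>" using open_meas by simp
qed

lemma proj_int: assumes u: "u \<in> A" shows "integrable \<beta> (\<lambda>s. s u)"
proof (rule finite_measure.integrable_const_bound[OF b_fin _ proj_meas[OF u]])
  show "AE s in \<beta>. norm (s u) \<le> bnd u"
    by (rule AE_I2) (use s_bound[OF _ u bnd[OF u]] b_space in auto)
qed

end

lemma meas_le_compact:
  assumes Mm: "M_measure A \<mu>" and Mn: "M_measure A \<nu>" and K: "compactin X K"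
  shows "measure \<mu> K \<le> measure \<nu> K"
proof (rule field_le_epsilon)
  fix e :: real assume e: "e > 0"
  have KD: "K \<subseteq> D" using K compactin_subset_topspace by fastforce
  have Kn: "K \<in> sets \<nu>" and Km: "K \<in> sets \<mu>" using compact_meas Mm Mn K by auto
  define Oc where "Oc = D - K"
  have On: "Oc \<in> sets \<nu>" unfolding Oc_def using sets.compl_sets[OF Kn] b_space[OF Mn] by simp
  interpret n: finite_measure \<nu> by (rule b_fin[OF Mn])
  interpret m: finite_measure \<mu> by (rule b_fin[OF Mm])
  obtain L where L: "compactin X L" "L \<subseteq> Oc" "measure \<nu> Oc - e < measure \<nu> L"
  proof (cases "measure \<nu> Oc - e < 0")
    case True
    then show ?thesis using that[of "{}"] by simp
  next
    case False
    have "ennreal (measure \<nu> Oc - e) < ennreal (measure \<nu> Oc)"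
      using False e by (subst ennreal_less_iff) auto
    also have "\<dots> = emeasure \<nu> Oc" by (simp add: n.emeasure_eq_measure)
    also have "\<dots> = (SUP K\<in>{K. compactin X K \<and> K \<subseteq> Oc}. emeasure \<nu> K)" by (rule b_reg[OF Mn On])
    finally obtain L where L: "compactin X L" "L \<subseteq> Oc" "ennreal (measure \<nu> Oc - e) < emeasure \<nu> L"
      by (auto simp: less_SUP_iff)
    then have "measure \<nu> Oc - e < measure \<nu> L"
      using False by (simp add: n.emeasure_eq_measure ennreal_less_iff)
    then show ?thesis using that L by blast
  qed
  have KL: "K \<inter> L = {}" using L(2) unfolding Oc_def by blast
  obtain w where wg: "good w" and w: "\<And>s. s \<in> D \<Longrightarrow> 0 \<le> Re (s w) \<and> Re (s w) \<le> 1"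
    and wK: "\<And>s. s \<in> K \<Longrightarrow> Re (s w) = 1" and wL: "\<And>s. s \<in> L \<Longrightarrow> Re (s w) = 0"
    using sepB[OF K L(1) KL] by blast
  have wA: "w \<in> A" using wg unfolding good_def by blast
  have Ln: "L \<in> sets \<nu>" using compact_meas[OF Mn L(1)] .
  have "measure \<mu> K = (LINT s|\<mu>. indicator K s)" using Km KD by (simp add: b_space[OF Mm] Int_absorb2)
  also have "\<dots> \<le> (LINT s|\<mu>. Re (s w))"
  proof (rule integral_mono)
    show "integrable \<mu> (indicator K :: _ \<Rightarrow> real)"
      by (intro integrable_real_indicator Km) (simp add: m.emeasure_eq_measure)
    show "integrable \<mu> (\<lambda>s. Re (s w))" using proj_int[OF Mm wA] by simp
    fix s assume "s \<in> space \<mu>"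
    then have s: "s \<in> D" using b_space[OF Mm] by simp
    show "indicator K s \<le> Re (s w)" using w[OF s] wK by (cases "s \<in> K") auto
  qed
  also have "\<dots> = Re (mean_value w)" using b_mean[OF Mm wA] integral_Re[OF proj_int[OF Mm wA]] by simp
  also have "\<dots> = (LINT s|\<nu>. Re (s w))" using b_mean[OF Mn wA] integral_Re[OF proj_int[OF Mn wA]] by simp
  also have "\<dots> \<le> (LINT s|\<nu>. indicator (D - L) s)"
  proof (rule integral_mono)
    show "integrable \<nu> (indicator (D - L) :: _ \<Rightarrow> real)"
      using sets.compl_sets[OF Ln] b_space[OF Mn]
      by (intro integrable_real_indicator) (simp_all add: n.emeasure_eq_measure)
    show "integrable \<nu> (\<lambda>s. Re (s w))" using proj_int[OF Mn wA] by simp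
    fix s assume "s \<in> space \<nu>"
    then have s: "s \<in> D" using b_space[OF Mn] by simp
    show "Re (s w) \<le> indicator (D - L) s" using w[OF s] wL s by (cases "s \<in> L") auto
  qed
  also have "\<dots> = measure \<nu> (D - L)"
    using sets.compl_sets[OF Ln] b_space[OF Mn] by (simp add: Int_absorb2 Diff_subset)
  also have "\<dots> = 1 - measure \<nu> L"
    using n.finite_measure_compl[OF Ln] b_space[OF Mn] b_meas1[OF Mn] by simp
  also have "\<dots> < 1 - (measure \<nu> Oc - e)" using L(3) by simp
  also have "measure \<nu> Oc = 1 - measure \<nu> K"
    using n.finite_measure_compl[OF Kn] b_space[OF Mn] b_meas1[OF Mn] unfolding Oc_def by simp
  finally show "measure \<mu> K \<le> measure \<nu> K + e" by simp
qed

lemma meas_eq: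
  assumes Mm: "M_measure A \<mu>" and Mn: "M_measure A \<nu>" and F: "F \<in> sets \<mu>"
  shows "emeasure \<mu> F = emeasure \<nu> F"
proof -
  interpret n: finite_measure \<nu> by (rule b_fin[OF Mn])
  interpret m: finite_measure \<mu> by (rule b_fin[OF Mm])
  have ck: "emeasure \<mu> K = emeasure \<nu> K" if K: "compactin X K" for K
    using meas_le_compact[OF Mm Mn K] meas_le_compact[OF Mn Mm K]
    by (simp add: n.emeasure_eq_measure m.emeasure_eq_measure)
  have Fn: "F \<in> sets \<nu>" using F b_sets[OF Mm] b_sets[OF Mn] by simp
  have "emeasure \<mu> F = (SUP K\<in>{K. compactin X K \<and> K \<subseteq> F}. emeasure \<mu> K)" by (rule b_reg[OF Mm F])
  also have "\<dots> = (SUP K\<in>{K. compactin X K \<and> K \<subseteq> F}. emeasure \<nu> K)"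
    by (rule SUP_cong) (auto simp: ck)
  also have "\<dots> = emeasure \<nu> F" by (rule b_reg[OF Mn Fn, symmetric])
  finally show ?thesis .
qed

lemma T_meas: assumes Mb: "M_measure A \<beta>" shows "T y \<in> measurable \<beta> \<beta>"
proof (rule measurable_sigma_sets[OF b_sets[OF Mb]])
  show "{U. openin X U} \<subseteq> Pow D" using openin_subset by fastforce
  show "T y \<in> space \<beta> \<rightarrow> D" using T_D b_space[OF Mb] by auto
  fix U assume "U \<in> {U. openin X U}"
  then have U: "openin X U" by simp
  have "T y -` U \<inter> space \<beta> = {s \<in> topspace X. T y s \<in> U}" using b_space[OF Mb] by auto
  moreover have "openin X {s \<in> topspace X. T y s \<in> U}"
    by (rule openin_continuous_map_preimage[OF T_cont U])
  ultimately show "T y -` U \<inter> space \<beta> \<in> sets \<beta>" using open_meas[OF Mb] by simp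
qed

lemma T_pre: assumes "F \<subseteq> D" shows "T (-y) -` F \<inter> D = T y ` F"
proof
  show "T (-y) -` F \<inter> D \<subseteq> T y ` F"
  proof
    fix s assume s: "s \<in> T (-y) -` F \<inter> D"
    then have "s = T y (T (-y) s)" using T_inv[of s "-y"] by simp
    then show "s \<in> T y ` F" using s by blast
  qed
  show "T y ` F \<subseteq> T (-y) -` F \<inter> D"
    using assms T_inv T_D by auto
qed

lemma mean_shift_A: assumes u: "u \<in> A" shows "mean_value (\<lambda>x. u (x + y)) = mean_value u"
proof -
  obtain m where m: "has_mean_value u m" using A_mean[OF u] by blast
  obtain m' where m': "has_mean_value (\<lambda>x. u (x + y)) m'" using A_mean[OF tr[OF u]] by blast
  have "m' = m" by (rule mean_shift[OF A_cont[OF u] bnd[OF u] m m'])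
  then show ?thesis using mean_value_eq[OF m] mean_value_eq[OF m'] by simp
qed

lemma push_M: assumes Mb: "M_measure A \<beta>" shows "M_measure A (distr \<beta> \<beta> (T (-y)))"
proof -
  define \<nu> where "\<nu> = distr \<beta> \<beta> (T (-y))"
  have Tm: "T (-y) \<in> measurable \<beta> \<beta>" by (rule T_meas[OF Mb])
  have sp: "space \<nu> = D" unfolding \<nu>_def using b_space[OF Mb] by simp
  have st: "sets \<nu> = sets \<beta>" unfolding \<nu>_def by simp
  have em: "emeasure \<nu> F = emeasure \<beta> (T y ` F)" if F: "F \<in> sets \<beta>" for F
  proof -
    have FD: "F \<subseteq> D" using sets.sets_into_space[OF F] b_space[OF Mb] by simp
    have "emeasure \<nu> F = emeasure \<beta> (T (-y) -` F \<inter> space \<beta>)"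
      unfolding \<nu>_def by (rule emeasure_distr[OF Tm F])
    then show ?thesis using T_pre[OF FD] b_space[OF Mb] by simp
  qed
  have Tsets: "T y ` F \<in> sets \<beta>" if F: "F \<in> sets \<beta>" for F
  proof -
    have FD: "F \<subseteq> D" using sets.sets_into_space[OF F] b_space[OF Mb] by simp
    have "T (-y) -` F \<inter> space \<beta> \<in> sets \<beta>" using Tm F by (rule measurable_sets)
    then show ?thesis using T_pre[OF FD] b_space[OF Mb] by simp
  qed
  have "space \<nu> = D" by (rule sp)
  moreover have "sets \<nu> = sigma_sets D {U. openin X U}" using st b_sets[OF Mb] by simp
  moreover have "emeasure \<nu> (space \<nu>) = 1"
  proof -
    have "emeasure \<nu> (space \<nu>) = emeasure \<beta> (T y ` D)" using em[of D] sp b_space[OF Mb] sets.top[of \<beta>] by simp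
    also have "T y ` D = D" using T_pre[of D, symmetric] T_D by auto
    finally show ?thesis using b_one[OF Mb] b_space[OF Mb] by simp
  qed
  moreover have "\<forall>F\<in>sets \<nu>. emeasure \<nu> F = (SUP K\<in>{K. compactin X K \<and> K \<subseteq> F}. emeasure \<nu> K)"
  proof
    fix F assume "F \<in> sets \<nu>"
    then have F: "F \<in> sets \<beta>" using st by simp
    have FD: "F \<subseteq> D" using sets.sets_into_space[OF F] b_space[OF Mb] by simp
    have ck: "{K. compactin X K \<and> K \<subseteq> T y ` F} = (\<lambda>K. T y ` K) ` {K. compactin X K \<and> K \<subseteq> F}"
    proof
      show "{K. compactin X K \<and> K \<subseteq> T y ` F} \<subseteq> (\<lambda>K. T y ` K) ` {K. compactin X K \<and> K \<subseteq> F}"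
      proof
        fix K assume K: "K \<in> {K. compactin X K \<and> K \<subseteq> T y ` F}"
        then have KD: "K \<subseteq> D" using compactin_subset_topspace by fastforce
        have "K = T y ` (T (-y) ` K)"
        proof -
          have "T y (T (-y) s) = s" if "s \<in> K" for s using T_inv[of s "-y"] KD that by auto
          then show ?thesis by (auto simp: image_iff)
        qed
        moreover have "compactin X (T (-y) ` K)" using K by (auto intro: image_compactin[OF _ T_cont])
        moreover have "T (-y) ` K \<subseteq> F"
        proof
          fix s assume "s \<in> T (-y) ` K"
          then obtain k where k: "k \<in> K" "s = T (-y) k" by blast
          then obtain f where f: "f \<in> F" "k = T y f" using K by blast
          then show "s \<in> F" using k T_inv[of f y] FD by auto
        qed
        ultimately show "K \<in> (\<lambda>K. T y ` K) ` {K. compactin X K \<and> K \<subseteq> F}" by blast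
      qed
      show "(\<lambda>K. T y ` K) ` {K. compactin X K \<and> K \<subseteq> F} \<subseteq> {K. compactin X K \<and> K \<subseteq> T y ` F}"
        by (auto intro: image_compactin[OF _ T_cont])
    qed
    have "emeasure \<nu> F = emeasure \<beta> (T y ` F)" by (rule em[OF F])
    also have "\<dots> = (SUP K\<in>{K. compactin X K \<and> K \<subseteq> T y ` F}. emeasure \<beta> K)"
      by (rule b_reg[OF Mb Tsets[OF F]])
    also have "\<dots> = (SUP K\<in>{K. compactin X K \<and> K \<subseteq> F}. emeasure \<beta> (T y ` K))"
      unfolding ck by (simp add: image_comp)
    also have "\<dots> = (SUP K\<in>{K. compactin X K \<and> K \<subseteq> F}. emeasure \<nu> K)"
      by (rule SUP_cong) (auto simp: em compact_meas[OF Mb])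
    finally show "emeasure \<nu> F = (SUP K\<in>{K. compactin X K \<and> K \<subseteq> F}. emeasure \<nu> K)" .
  qed
  moreover have "\<forall>u\<in>A. mean_value u = (LINT s|\<nu>. s u)"
  proof
    fix u assume u: "u \<in> A"
    have "(LINT s|\<nu>. s u) = (LINT s|\<beta>. T (-y) s u)"
      unfolding \<nu>_def by (rule integral_distr[OF Tm proj_meas[OF Mb u]])
    also have "\<dots> = (LINT s|\<beta>. s (\<lambda>x. u (x + - y)))"
      by (rule Bochner_Integration.integral_cong) (auto simp: T_A[OF u])
    also have "\<dots> = mean_value (\<lambda>x. u (x + - y))" by (rule b_mean[OF Mb tr[OF u], symmetric])
    also have "\<dots> = mean_value u" by (rule mean_shift_A[OF u])
    finally show "mean_value u = (LINT s|\<nu>. s u)" by simp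
  qed
  ultimately show ?thesis unfolding M_measure_def \<nu>_def[symmetric] by blast
qed

lemma invariance:
  assumes Mb: "M_measure A \<beta>" and F: "F \<in> sets \<beta>"
  shows "emeasure \<beta> (T y ` F) = emeasure \<beta> F"
proof -
  have Tm: "T (-y) \<in> measurable \<beta> \<beta>" by (rule T_meas[OF Mb])
  have FD: "F \<subseteq> D" using sets.sets_into_space[OF F] b_space[OF Mb] by simp
  have "emeasure (distr \<beta> \<beta> (T (-y))) F = emeasure \<beta> (T (-y) -` F \<inter> space \<beta>)"
    by (rule emeasure_distr[OF Tm F])
  also have "\<dots> = emeasure \<beta> (T y ` F)" using T_pre[OF FD] b_space[OF Mb] by simp
  finally have "emeasure \<beta> (T y ` F) = emeasure (distr \<beta> \<beta> (T (-y))) F" by simp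
  also have "\<dots> = emeasure \<beta> F"
    using meas_eq[OF push_M[OF Mb] Mb] F by simp
  finally show ?thesis .
qed

end

theorem theorem2p2:
  fixes A :: "('a::euclidean_space \<Rightarrow> complex) set"
  assumes "H_supralgebra A"
    and "\<forall>u\<in>A. \<forall>y. (\<lambda>x. u (x + y)) \<in> A"
    and "\<forall>u\<in>A. uniformly_continuous_on UNIV u"
  shows "\<exists>T :: 'a \<Rightarrow> (('a \<Rightarrow> complex) \<Rightarrow> complex) \<Rightarrow> (('a \<Rightarrow> complex) \<Rightarrow> complex).
           (\<forall>y. homeomorphic_map (spectrum_topology A) (spectrum_topology A) (T y)) \<and>
           (\<forall>y. \<forall>u\<in>A. \<forall>s\<in>gelfand_spectrum A. s (\<lambda>x. u (x + y)) = T y s u) \<and>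
           dynamical_system (spectrum_topology A) T \<and>
           (\<forall>\<beta>. M_measure A \<beta> \<longrightarrow>
              (\<forall>y. \<forall>F\<in>sets \<beta>. emeasure \<beta> (T y ` F) = emeasure \<beta> F))"
proof -
  interpret hsat A
    by unfold_locales (use assms in auto)
  show ?thesis
  proof (intro exI[of _ T] conjI allI ballI impI)
    fix y show "homeomorphic_map (spectrum_topology A) (spectrum_topology A) (T y)" by (rule T_homeo)
  next
    fix y u s assume "u \<in> A" "s \<in> gelfand_spectrum A"
    then show "s (\<lambda>x. u (x + y)) = T y s u" by (simp add: T_A)
  next
    show "dynamical_system (spectrum_topology A) T" by (rule dyn)
  next
    fix \<beta> y F assume "M_measure A \<beta>" "F \<in> sets \<beta>"
    then show "emeasure \<beta> (T y ` F) = emeasure \<beta> F" by (rule invariance)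
  qed
qed

end
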